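(* Let $(\mathcal{L},[\cdot,\cdot,\cdot]_{\mathcal{L}})$ be a (right) $3$-Leibniz algebra over a field $\mathbb{K}$. Then the linear map $R$ on $(\mathbb{K}\oplus(\mathcal{L}\otimes\mathcal{L}))^{\otimes 2}$ given by $R\big((a,x_1\otimes x_2)\otimes(b,y_1\otimes y_2)\big)=(b,y_1\otimes y_2)\otimes(a,x_1\otimes x_2)+(1,0)\otimes\big(0,[x_1,y_1,y_2]_{\mathcal{L}}\otimes x_2+x_1\otimes[x_2,y_1,y_2]_{\mathcal{L}}\big)$ (extended linearly in the $\mathcal{L}\otimes\mathcal{L}$ components) is a solution of the Yang-Baxter equation on $\mathbb{K}\oplus(\mathcal{L}\otimes\mathcal{L})$.
   Context: A (right) $3$-Leibniz algebra is a vector space $\mathcal{L}$ with a trilinear map $[\cdot,\cdot,\cdot]_{\mathcal{L}}$ such that $[[x_1,x_2,x_3]_{\mathcal{L}},y_1,y_2]_{\mathcal{L}}=[[x_1,y_1,y_2]_{\mathcal{L}},x_2,x_3]_{\mathcal{L}}+[x_1,[x_2,y_1,y_2]_{\mathcal{L}},x_3]_{\mathcal{L}}+[x_1,x_2,[x_3,y_1,y_2]_{\mathcal{L}}]_{\mathcal{L}}$. A solution of the Yang-Baxter equation on $V$ is an invertible linear $R:V\otimes V\to V\otimes V$ with $(R\otimes\mathrm{Id})(\mathrm{Id}\otimes R)(R\otimes\mathrm{Id})=(\mathrm{Id}\otimes R)(R\otimes\mathrm{Id})(\mathrm{Id}\otimes R)$. *)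

theory Defs
  imports Main
begin

text \<open>A vector space over a field 'k with basis indexed by a set S is modelled as
  the finitely supported coordinate functions supported in S.  Every vector
  space has a basis, so this is no loss of generality; tensor products of
  spaces with bases S and T have basis S \<times> T, and a direct sum has the
  disjoint union of the bases as basis.\<close>

definition fs_on :: "'i set \<Rightarrow> ('i \<Rightarrow> 'k::zero) set" where
  "fs_on S = {f. finite {i. f i \<noteq> 0} \<and> {i. f i \<noteq> 0} \<subseteq> S}"

text \<open>Linear extension of a map given on basis vectors: g i is the image of e_i.\<close>
definition lin_ext :: "('i \<Rightarrow> 'j \<Rightarrow> 'k::field) \<Rightarrow> ('i \<Rightarrow> 'k) \<Rightarrow> ('j \<Rightarrow> 'k)" where
  "lin_ext g f = (\<lambda>j. \<Sum>i\<in>{i. f i \<noteq> 0}. f i * g i j)"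

definition tri_ext :: "('b \<Rightarrow> 'b \<Rightarrow> 'b \<Rightarrow> 'b \<Rightarrow> 'k::field)
    \<Rightarrow> ('b \<Rightarrow> 'k) \<Rightarrow> ('b \<Rightarrow> 'k) \<Rightarrow> ('b \<Rightarrow> 'k) \<Rightarrow> ('b \<Rightarrow> 'k)" where
  "tri_ext br x y z = (\<lambda>d. \<Sum>a\<in>{a. x a \<noteq> 0}. \<Sum>b\<in>{b. y b \<noteq> 0}. \<Sum>c\<in>{c. z c \<noteq> 0}.
       x a * y b * z c * br a b c d)"

text \<open>(Right) 3-Leibniz algebra on L with basis B: br a b c is the coordinate vector of
  [e_a, e_b, e_c], and the extended trilinear bracket satisfies the 3-Leibniz identity.\<close>
definition leibniz3 :: "'b set \<Rightarrow> ('b \<Rightarrow> 'b \<Rightarrow> 'b \<Rightarrow> 'b \<Rightarrow> 'k::field) \<Rightarrow> bool" where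
  "leibniz3 B br \<longleftrightarrow>
     (\<forall>a\<in>B. \<forall>b\<in>B. \<forall>c\<in>B. br a b c \<in> fs_on B) \<and>
     (\<forall>x1\<in>fs_on B. \<forall>x2\<in>fs_on B. \<forall>x3\<in>fs_on B. \<forall>y1\<in>fs_on B. \<forall>y2\<in>fs_on B.
        tri_ext br (tri_ext br x1 x2 x3) y1 y2 =
          (\<lambda>d. tri_ext br (tri_ext br x1 y1 y2) x2 x3 d
              + tri_ext br x1 (tri_ext br x2 y1 y2) x3 d
              + tri_ext br x1 x2 (tri_ext br x3 y1 y2) d))"

text \<open>Basis of V = K \<oplus> (L \<otimes> L): None is (1,0), Some (a,b) is (0, e_a \<otimes> e_b).\<close>
definition Vbasis :: "'b set \<Rightarrow> ('b \<times> 'b) option set" where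
  "Vbasis B = insert None (Some ` (B \<times> B))"

definition kdelta :: "'a \<Rightarrow> 'a \<Rightarrow> 'k::field" where
  "kdelta x y = (if x = y then 1 else 0)"

text \<open>Images of basis vectors e_i \<otimes> e_j of V \<otimes> V under R:
  R((a,x)\<otimes>(b,y)) = (b,y)\<otimes>(a,x) + (1,0)\<otimes>(0,[x1,y1,y2]\<otimes>x2 + x1\<otimes>[x2,y1,y2]).\<close>
definition Rbasis :: "('b \<Rightarrow> 'b \<Rightarrow> 'b \<Rightarrow> 'b \<Rightarrow> 'k::field)
   \<Rightarrow> ('b \<times> 'b) option \<times> ('b \<times> 'b) option \<Rightarrow> ('b \<times> 'b) option \<times> ('b \<times> 'b) option \<Rightarrow> 'k" where
  "Rbasis br ij pq =
     kdelta (snd ij, fst ij) pq +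
     (case ij of
        (Some (x1, x2), Some (y1, y2)) \<Rightarrow>
          (case pq of
             (None, Some (c, d)) \<Rightarrow> br x1 y1 y2 c * kdelta d x2 + kdelta c x1 * br x2 y1 y2 d
           | _ \<Rightarrow> 0)
      | _ \<Rightarrow> 0)"

definition tensor_id_right :: "('i \<times> 'i \<Rightarrow> 'i \<times> 'i \<Rightarrow> 'k::field) \<Rightarrow> 'i \<times> 'i \<times> 'i \<Rightarrow> 'i \<times> 'i \<times> 'i \<Rightarrow> 'k" where
  "tensor_id_right g = (\<lambda>(p, q, r) (p', q', r'). g (p, q) (p', q') * kdelta r r')"

definition tensor_id_left :: "('i \<times> 'i \<Rightarrow> 'i \<times> 'i \<Rightarrow> 'k::field) \<Rightarrow> 'i \<times> 'i \<times> 'i \<Rightarrow> 'i \<times> 'i \<times> 'i \<Rightarrow> 'k" where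
  "tensor_id_left g = (\<lambda>(p, q, r) (p', q', r'). kdelta p p' * g (q, r) (q', r'))"

definition YBE_solution :: "'i set \<Rightarrow> ('i \<times> 'i \<Rightarrow> 'i \<times> 'i \<Rightarrow> 'k::field) \<Rightarrow> bool" where
  "YBE_solution I g \<longleftrightarrow>
     (\<forall>ij\<in>I \<times> I. g ij \<in> fs_on (I \<times> I)) \<and>
     bij_betw (lin_ext g) (fs_on (I \<times> I)) (fs_on (I \<times> I)) \<and>
     (\<forall>w\<in>fs_on (I \<times> I \<times> I).
        lin_ext (tensor_id_right g) (lin_ext (tensor_id_left g) (lin_ext (tensor_id_right g) w)) =
        lin_ext (tensor_id_left g) (lin_ext (tensor_id_right g) (lin_ext (tensor_id_left g) w)))"

end

theory Submission imports Defs "HOL-Library.Function_Algebras" begin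

abbreviation fin :: "('i \<Rightarrow> 'k::zero) \<Rightarrow> bool" where
  "fin f \<equiv> finite {i. f i \<noteq> 0}"

definition ev :: "'i \<Rightarrow> 'i \<Rightarrow> 'k::{zero,one}" where
  "ev i = (\<lambda>j. if j = i then 1 else 0)"

lemma lin_ext_superset:
  assumes "finite S" "{i. f i \<noteq> 0} \<subseteq> S"
  shows "lin_ext g f j = (\<Sum>i\<in>S. f i * g i j)"
  unfolding lin_ext_def
  by (rule sum.mono_neutral_left) (use assms in auto)

lemma lin_ext_add:
  assumes "fin f1" "fin f2"
  shows "lin_ext g (f1 + f2) = lin_ext g f1 + lin_ext g f2"
proof
  fix j
  let ?S = "{i. f1 i \<noteq> 0} \<union> {i. f2 i \<noteq> 0}"
  have fS: "finite ?S" using assms by auto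
  have "lin_ext g (f1 + f2) j = (\<Sum>i\<in>?S. (f1 + f2) i * g i j)"
    by (rule lin_ext_superset[OF fS]) auto
  also have "\<dots> = (\<Sum>i\<in>?S. f1 i * g i j) + (\<Sum>i\<in>?S. f2 i * g i j)"
    by (simp add: distrib_right sum.distrib)
  also have "\<dots> = lin_ext g f1 j + lin_ext g f2 j"
    using lin_ext_superset[OF fS, of f1 g j] lin_ext_superset[OF fS, of f2 g j] by auto
  finally show "lin_ext g (f1 + f2) j = (lin_ext g f1 + lin_ext g f2) j" by simp
qed

lemma lin_ext_zero: "lin_ext g 0 = 0"
  by (simp add: lin_ext_def fun_eq_iff)

lemma lin_ext_ev: "lin_ext g (ev i) = g i"
  by (simp add: lin_ext_def ev_def fun_eq_iff)

lemma lin_ext_cong: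
  assumes "\<And>i. f i \<noteq> 0 \<Longrightarrow> g i = h i"
  shows "lin_ext g f = lin_ext h f"
  unfolding lin_ext_def using assms by (intro ext sum.cong) auto

lemma supp_lin_ext:
  "{j. lin_ext g f j \<noteq> 0} \<subseteq> (\<Union>i\<in>{i. f i \<noteq> 0}. {j. g i j \<noteq> 0})"
proof
  fix j assume "j \<in> {j. lin_ext g f j \<noteq> 0}"
  then have "(\<Sum>i\<in>{i. f i \<noteq> 0}. f i * g i j) \<noteq> 0" by (simp add: lin_ext_def)
  then obtain i where "i \<in> {i. f i \<noteq> 0}" "f i * g i j \<noteq> 0"
    by (rule sum.not_neutral_contains_not_neutral)
  then have "f i \<noteq> 0" "g i j \<noteq> 0" by auto
  then show "j \<in> (\<Union>i\<in>{i. f i \<noteq> 0}. {j. g i j \<noteq> 0})" by auto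
qed

lemma fin_lin_ext:
  assumes "fin f" "\<And>i. f i \<noteq> 0 \<Longrightarrow> fin (g i)"
  shows "fin (lin_ext g f)"
  by (rule finite_subset[OF supp_lin_ext]) (use assms in auto)

lemma fs_onI: "finite {i. f i \<noteq> 0} \<Longrightarrow> {i. f i \<noteq> 0} \<subseteq> S \<Longrightarrow> f \<in> fs_on S"
  by (simp add: fs_on_def)

lemma fs_on_fin: "f \<in> fs_on S \<Longrightarrow> fin f"
  by (simp add: fs_on_def)

lemma fs_on_supp: "f \<in> fs_on S \<Longrightarrow> f i \<noteq> 0 \<Longrightarrow> i \<in> S"
  by (auto simp add: fs_on_def)

lemma fs_lin_ext:
  assumes "f \<in> fs_on S" "\<And>i. i \<in> S \<Longrightarrow> g i \<in> fs_on T"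
  shows "lin_ext g f \<in> fs_on T"
proof (rule fs_onI)
  show "fin (lin_ext g f)"
    using assms by (intro fin_lin_ext) (auto dest: fs_on_fin fs_on_supp)
  show "{i. lin_ext g f i \<noteq> 0} \<subseteq> T"
    using supp_lin_ext[of g f] assms by (auto dest: fs_on_supp)
qed

lemma lin_ext_comp:
  assumes "fin f" "\<And>i. f i \<noteq> 0 \<Longrightarrow> fin (g i)"
  shows "lin_ext h (lin_ext g f) = lin_ext (\<lambda>i. lin_ext h (g i)) f"
proof
  fix j
  let ?F = "{i. f i \<noteq> 0}"
  let ?K = "\<Union>i\<in>?F. {k. g i k \<noteq> 0}"
  have fK: "finite ?K" using assms by auto
  have "lin_ext h (lin_ext g f) j = (\<Sum>k\<in>?K. lin_ext g f k * h k j)"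
    by (rule lin_ext_superset[OF fK supp_lin_ext])
  also have "\<dots> = (\<Sum>k\<in>?K. (\<Sum>i\<in>?F. f i * g i k) * h k j)"
    by (simp add: lin_ext_def)
  also have "\<dots> = (\<Sum>i\<in>?F. f i * (\<Sum>k\<in>?K. g i k * h k j))"
    unfolding sum_distrib_right sum_distrib_left mult.assoc by (rule sum.swap)
  also have "\<dots> = (\<Sum>i\<in>?F. f i * lin_ext h (g i) j)"
  proof (rule sum.cong[OF refl])
    fix i assume "i \<in> ?F"
    then have "{k. g i k \<noteq> 0} \<subseteq> ?K" by auto
    then show "f i * (\<Sum>k\<in>?K. g i k * h k j) = f i * lin_ext h (g i) j"
      using lin_ext_superset[OF fK, of "g i" h j] by simp
  qed
  also have "\<dots> = lin_ext (\<lambda>i. lin_ext h (g i)) f j" by (simp add: lin_ext_def)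
  finally show "lin_ext h (lin_ext g f) j = lin_ext (\<lambda>i. lin_ext h (g i)) f j" .
qed


definition Ncoef :: "('b \<Rightarrow> 'b \<Rightarrow> 'b \<Rightarrow> 'b \<Rightarrow> 'k::field) \<Rightarrow> ('b \<times> 'b) option \<Rightarrow> ('b \<times> 'b) option \<Rightarrow> ('b \<times> 'b) option \<Rightarrow> 'k" where
  "Ncoef br a b q = (case a of Some (x1, x2) \<Rightarrow> (case b of Some (y1, y2) \<Rightarrow>
      (case q of Some (c, d) \<Rightarrow> br x1 y1 y2 c * kdelta d x2 + kdelta c x1 * br x2 y1 y2 d | None \<Rightarrow> 0)
     | None \<Rightarrow> 0) | None \<Rightarrow> 0)"

definition Phi where "Phi br F = lin_ext (\<lambda>(a, b). Ncoef br a b) F"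

definition tp :: "('i \<Rightarrow> 'k::comm_ring_1) \<Rightarrow> ('j \<Rightarrow> 'k) \<Rightarrow> 'i \<times> 'j \<Rightarrow> 'k" where
  "tp u v = (\<lambda>(p, q). u p * v q)"

definition dl where "dl br u v = Phi br (tp u v)"

definition T3 :: "('i \<Rightarrow> 'k::comm_ring_1) \<Rightarrow> ('i \<Rightarrow> 'k) \<Rightarrow> ('i \<Rightarrow> 'k) \<Rightarrow> 'i \<times> 'i \<times> 'i \<Rightarrow> 'k" where
  "T3 u v w = (\<lambda>(p, q, r). u p * v q * w r)"

definition em :: "('b \<times> 'b \<Rightarrow> 'k::zero) \<Rightarrow> ('b \<times> 'b) option \<Rightarrow> 'k" where
  "em M = (\<lambda>z. case z of None \<Rightarrow> 0 | Some cd \<Rightarrow> M cd)"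

lemma Rbasis_eq:
  "Rbasis br ij pq = kdelta (snd ij, fst ij) pq +
     (if fst pq = None then Ncoef br (fst ij) (snd ij) (snd pq) else 0)"
  by (cases ij; cases pq) (auto simp: Rbasis_def Ncoef_def kdelta_def split: option.split)

lemma kdelta_swap_sum:
  assumes "finite S" "{i. F i \<noteq> 0} \<subseteq> S"
  shows "(\<Sum>i\<in>S. F i * kdelta (snd i, fst i) (p, q)) = F (q, p)"
proof -
  have "(\<Sum>i\<in>S. F i * kdelta (snd i, fst i) (p, q)) = (\<Sum>i\<in>S. if i = (q, p) then F i else 0)"
    by (intro sum.cong) (auto simp: kdelta_def)
  also have "\<dots> = F (q, p)" using assms by (auto simp: sum.delta)
  finally show ?thesis .
qed

lemma R_formula:
  assumes "fin F"
  shows "lin_ext (Rbasis br) F = (\<lambda>(p, q). F (q, p) + ev None p * Phi br F q)"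
proof (intro ext, clarify)
  fix p q
  let ?S = "{i. F i \<noteq> 0}"
  have "lin_ext (Rbasis br) F (p, q) = (\<Sum>i\<in>?S. F i * Rbasis br i (p, q))"
    by (simp add: lin_ext_def)
  also have "\<dots> = (\<Sum>i\<in>?S. F i * kdelta (snd i, fst i) (p, q))
      + ev None p * (\<Sum>i\<in>?S. F i * (case i of (a, b) \<Rightarrow> Ncoef br a b) q)"
    by (cases p) (simp_all add: Rbasis_eq distrib_left sum.distrib sum_distrib_left ev_def split_def)
  also have "\<dots> = F (q, p) + ev None p * Phi br F q"
    using kdelta_swap_sum[OF assms order_refl] by (simp add: Phi_def lin_ext_def)
  finally show "lin_ext (Rbasis br) F (p, q) = F (q, p) + ev None p * Phi br F q" .
qed

lemma fin_tp: "fin u \<Longrightarrow> fin v \<Longrightarrow> fin (tp u v)"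
  by (rule finite_subset[of _ "{i. u i \<noteq> 0} \<times> {i. v i \<noteq> 0}"]) (auto simp: tp_def)

lemma R_tp:
  assumes "fin u" "fin v"
  shows "lin_ext (Rbasis br) (tp u v) = tp v u + tp (ev None) (dl br u v)"
  using R_formula[OF fin_tp[OF assms], of br]
  by (auto simp: tp_def dl_def fun_eq_iff mult.commute)


lemma kdelta_sum:
  assumes "finite W" "{i. w i \<noteq> 0} \<subseteq> W"
  shows "(\<Sum>r\<in>W. c * (w r * kdelta r r')) = c * w r'"
proof -
  have "(\<Sum>r\<in>W. c * (w r * kdelta r r')) = (\<Sum>r\<in>W. if r = r' then c * w r else 0)"
    by (intro sum.cong) (auto simp: kdelta_def)
  also have "\<dots> = c * w r'" using assms by (auto simp: sum.delta')
  finally show ?thesis .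
qed

lemma fin_T3: "fin u \<Longrightarrow> fin v \<Longrightarrow> fin w \<Longrightarrow> fin (T3 u v w)"
  by (rule finite_subset[of _ "{i. u i \<noteq> 0} \<times> {i. v i \<noteq> 0} \<times> {i. w i \<noteq> 0}"]) (auto simp: T3_def)

lemma tid_right_T3:
  fixes u v w :: "'i \<Rightarrow> 'k::field"
  assumes "fin u" "fin v" "fin w"
  shows "lin_ext (tensor_id_right g) (T3 u v w) = (\<lambda>(p, q, r). lin_ext g (tp u v) (p, q) * w r)"
proof (intro ext, clarify)
  fix p' q' r'
  let ?U = "{i. u i \<noteq> 0}" and ?V = "{i. v i \<noteq> 0}" and ?W = "{i. w i \<noteq> 0}"
  have "lin_ext (tensor_id_right g) (T3 u v w) (p', q', r') =
      (\<Sum>x\<in>?U \<times> ?V \<times> ?W. T3 u v w x * tensor_id_right g x (p', q', r'))"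
    by (rule lin_ext_superset) (use assms in \<open>auto simp: T3_def\<close>)
  also have "\<dots> = (\<Sum>p\<in>?U. \<Sum>q\<in>?V. \<Sum>r\<in>?W. (u p * v q * g (p, q) (p', q')) * (w r * kdelta r r'))"
    by (simp add: sum.cartesian_product' T3_def tensor_id_right_def mult_ac)
  also have "\<dots> = (\<Sum>p\<in>?U. \<Sum>q\<in>?V. (u p * v q * g (p, q) (p', q')) * w r')"
    using assms by (simp add: kdelta_sum)
  also have "\<dots> = lin_ext g (tp u v) (p', q') * w r'"
  proof -
    have "lin_ext g (tp u v) (p', q') = (\<Sum>x\<in>?U \<times> ?V. tp u v x * g x (p', q'))"
      by (rule lin_ext_superset) (use assms in \<open>auto simp: tp_def\<close>)
    then show ?thesis
      by (simp add: sum.cartesian_product' tp_def sum_distrib_right)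
  qed
  finally show "lin_ext (tensor_id_right g) (T3 u v w) (p', q', r') = lin_ext g (tp u v) (p', q') * w r'" .
qed

lemma tid_left_T3:
  fixes u v w :: "'i \<Rightarrow> 'k::field"
  assumes "fin u" "fin v" "fin w"
  shows "lin_ext (tensor_id_left g) (T3 u v w) = (\<lambda>(p, q, r). u p * lin_ext g (tp v w) (q, r))"
proof (intro ext, clarify)
  fix p' q' r'
  let ?U = "{i. u i \<noteq> 0}" and ?V = "{i. v i \<noteq> 0}" and ?W = "{i. w i \<noteq> 0}"
  have "lin_ext (tensor_id_left g) (T3 u v w) (p', q', r') =
      (\<Sum>x\<in>?U \<times> ?V \<times> ?W. T3 u v w x * tensor_id_left g x (p', q', r'))"
    by (rule lin_ext_superset) (use assms in \<open>auto simp: T3_def\<close>)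
  also have "\<dots> = (\<Sum>x\<in>?V \<times> ?W. tp v w x * g x (q', r')) * (\<Sum>p\<in>?U. u p * kdelta p p')"
    by (simp add: sum.cartesian_product' T3_def tensor_id_left_def tp_def split_def
        sum_distrib_right sum_distrib_left mult_ac sum.swap[of _ ?U])
  also have "(\<Sum>p\<in>?U. u p * kdelta p p') = u p'"
    using kdelta_sum[of ?U u 1 p'] assms by simp
  also have "(\<Sum>x\<in>?V \<times> ?W. tp v w x * g x (q', r')) = lin_ext g (tp v w) (q', r')"
    by (rule lin_ext_superset[symmetric]) (use assms in \<open>auto simp: tp_def\<close>)
  finally show "lin_ext (tensor_id_left g) (T3 u v w) (p', q', r') = u p' * lin_ext g (tp v w) (q', r')"
    by simp
qed

lemma R12:
  fixes u v w :: "('b \<times> 'b) option \<Rightarrow> 'k::field"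
  assumes "fin u" "fin v" "fin w"
  shows "lin_ext (tensor_id_right (Rbasis br)) (T3 u v w) = T3 v u w + T3 (ev None) (dl br u v) w"
  using assms by (simp add: tid_right_T3 R_tp fin_tp) (simp add: fun_eq_iff T3_def tp_def algebra_simps)

lemma R23:
  fixes u v w :: "('b \<times> 'b) option \<Rightarrow> 'k::field"
  assumes "fin u" "fin v" "fin w"
  shows "lin_ext (tensor_id_left (Rbasis br)) (T3 u v w) = T3 u w v + T3 u (ev None) (dl br v w)"
  using assms by (simp add: tid_left_T3 R_tp fin_tp) (simp add: fun_eq_iff T3_def tp_def algebra_simps)


lemma tp_add1: "tp (u1 + u2) v = tp u1 v + tp u2 v"
  by (simp add: tp_def fun_eq_iff distrib_right)

lemma tp_add2: "tp u (v1 + v2) = tp u v1 + tp u v2"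
  by (simp add: tp_def fun_eq_iff distrib_left)

lemma fin_add: "fin (f::'i \<Rightarrow> 'k::field) \<Longrightarrow> fin g \<Longrightarrow> fin (f + g)"
  by (rule finite_subset[of _ "{i. f i \<noteq> 0} \<union> {i. g i \<noteq> 0}"]) auto

lemma dl_add1: "fin u1 \<Longrightarrow> fin u2 \<Longrightarrow> fin v \<Longrightarrow> dl br (u1 + u2) v = dl br u1 v + dl br u2 v"
  by (simp add: dl_def Phi_def tp_add1 lin_ext_add fin_tp)

lemma dl_add2: "fin u \<Longrightarrow> fin v1 \<Longrightarrow> fin v2 \<Longrightarrow> dl br u (v1 + v2) = dl br u v1 + dl br u v2"
  by (simp add: dl_def Phi_def tp_add2 lin_ext_add fin_tp)

lemma dl_None1:
  assumes "\<And>a. u a \<noteq> 0 \<Longrightarrow> a = None"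
  shows "dl br u v = 0"
proof -
  have *: "tp u v x * (case x of (a, b) \<Rightarrow> Ncoef br a b) q = 0" for x q
  proof -
    obtain x1 x2 where x: "x = (x1, x2)" by (cases x)
    show "tp u v x * (case x of (a, b) \<Rightarrow> Ncoef br a b) q = 0"
    proof (cases "u x1 = 0")
      case False
      then have "x1 = None" using assms by auto
      then show ?thesis by (simp add: x Ncoef_def)
    qed (simp add: x tp_def)
  qed
  show ?thesis unfolding dl_def Phi_def lin_ext_def zero_fun_def by (intro ext sum.neutral ballI *)
qed

lemma dl_None2:
  assumes "\<And>a. v a \<noteq> 0 \<Longrightarrow> a = None"
  shows "dl br u v = 0"
proof -
  have *: "tp u v x * (case x of (a, b) \<Rightarrow> Ncoef br a b) q = 0" for x q
  proof -
    obtain x1 x2 where x: "x = (x1, x2)" by (cases x)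
    show "tp u v x * (case x of (a, b) \<Rightarrow> Ncoef br a b) q = 0"
    proof (cases "v x2 = 0")
      case False
      then have "x2 = None" using assms by auto
      then show ?thesis by (simp add: x Ncoef_def split: option.split)
    qed (simp add: x tp_def)
  qed
  show ?thesis unfolding dl_def Phi_def lin_ext_def zero_fun_def by (intro ext sum.neutral ballI *)
qed

lemma dl_e1 [simp]: "dl br (ev None) v = 0" "dl br u (ev None) = 0" "dl br 0 v = 0" "dl br u 0 = 0"
  by (auto intro: dl_None1 dl_None2 simp: ev_def split: if_splits)

lemma T3_zero [simp]: "T3 u 0 w = 0" "T3 u v 0 = 0"
  by (simp_all add: T3_def fun_eq_iff)

lemma T3_add3: "T3 u v (w1 + w2) = T3 u v w1 + T3 u v w2"
  by (simp add: T3_def fun_eq_iff distrib_left)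

lemma tri_ext_lin: "tri_ext br x y z = lin_ext (\<lambda>a. lin_ext (\<lambda>b. lin_ext (\<lambda>c. br a b c) z) y) x"
  by (simp add: tri_ext_def lin_ext_def fun_eq_iff sum_distrib_left mult.assoc)

lemma tri_superset:
  assumes "finite X" "{i. x i \<noteq> 0} \<subseteq> X" "finite Y" "{i. y i \<noteq> 0} \<subseteq> Y"
    "finite Z" "{i. z i \<noteq> 0} \<subseteq> Z"
  shows "tri_ext br x y z d = (\<Sum>a\<in>X. \<Sum>b\<in>Y. \<Sum>c\<in>Z. x a * y b * z c * br a b c d)"
  unfolding tri_ext_lin lin_ext_superset[OF assms(1,2)] lin_ext_superset[OF assms(3,4)]
    lin_ext_superset[OF assms(5,6)]
  by (simp add: sum_distrib_left mult.assoc)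

lemma kd_collapse:
  assumes "finite W" "{i. w i \<noteq> 0} \<subseteq> W"
  shows "(\<Sum>r\<in>W. w r * kdelta j r * K r) = w j * K j"
proof -
  have "(\<Sum>r\<in>W. w r * kdelta j r * K r) = (\<Sum>r\<in>W. if r = j then w r * K r else 0)"
    by (intro sum.cong) (auto simp: kdelta_def)
  also have "\<dots> = w j * K j" using assms by (auto simp: sum.delta')
  finally show ?thesis .
qed

lemma fin_em: "fin a \<Longrightarrow> fin b \<Longrightarrow> fin (em (tp a b))"
  by (rule finite_subset[of _ "Some ` ({i. a i \<noteq> 0} \<times> {i. b i \<noteq> 0})"])
     (auto simp: em_def tp_def split: option.splits)

lemma G:
  fixes a b c d :: "'b \<Rightarrow> 'k::field"
  assumes fa: "fin a" and fb: "fin b" and fc: "fin c" and fd: "fin d"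
  shows "dl br (em (tp a b)) (em (tp c d)) = em (tp (tri_ext br a c d) b) + em (tp a (tri_ext br b c d))"
proof
  fix z
  show "dl br (em (tp a b)) (em (tp c d)) z = (em (tp (tri_ext br a c d) b) + em (tp a (tri_ext br b c d))) z"
  proof (cases z)
    case None
    have *: "\<And>x. tp (em (tp a b)) (em (tp c d)) x * (case x of (x, y) \<Rightarrow> Ncoef br x y) None = 0"
      by (auto simp: Ncoef_def split: option.split prod.split)
    have "dl br (em (tp a b)) (em (tp c d)) z = 0"
      unfolding None dl_def Phi_def lin_ext_def by (intro sum.neutral ballI *)
    then show ?thesis by (simp add: None em_def)
  next
    case (Some ij)
    obtain i j where ij: "z = Some (i, j)" using Some by (cases ij) auto
    let ?A = "{i. a i \<noteq> 0}" and ?B = "{i. b i \<noteq> 0}" and ?C = "{i. c i \<noteq> 0}" and ?D = "{i. d i \<noteq> 0}"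
    have "dl br (em (tp a b)) (em (tp c d)) z =
      (\<Sum>x\<in>Some ` (?A \<times> ?B) \<times> Some ` (?C \<times> ?D). tp (em (tp a b)) (em (tp c d)) x * (case x of (x, y) \<Rightarrow> Ncoef br x y) z)"
      unfolding dl_def Phi_def
      by (rule lin_ext_superset) (use fa fb fc fd in \<open>auto simp: tp_def em_def split: option.splits\<close>)
    also have "\<dots> = (\<Sum>x1\<in>?A. \<Sum>x2\<in>?B. \<Sum>y1\<in>?C. \<Sum>y2\<in>?D.
        a x1 * b x2 * c y1 * d y2 * (br x1 y1 y2 i * kdelta j x2 + kdelta i x1 * br x2 y1 y2 j))"
      by (simp add: sum.cartesian_product' sum.reindex ij tp_def em_def Ncoef_def) (simp add: mult.assoc)
    also have "\<dots> = (\<Sum>x1\<in>?A. \<Sum>x2\<in>?B. b x2 * kdelta j x2 * (\<Sum>y1\<in>?C. \<Sum>y2\<in>?D.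
        a x1 * c y1 * d y2 * br x1 y1 y2 i)) + (\<Sum>x1\<in>?A. a x1 * kdelta i x1 * (\<Sum>x2\<in>?B. \<Sum>y1\<in>?C. \<Sum>y2\<in>?D.
        b x2 * c y1 * d y2 * br x2 y1 y2 j))"
      by (simp only: distrib_left sum.distrib sum_distrib_left) (simp add: mult_ac)
    also have "\<dots> = (\<Sum>x1\<in>?A. b j * (\<Sum>y1\<in>?C. \<Sum>y2\<in>?D. a x1 * c y1 * d y2 * br x1 y1 y2 i))
       + a i * (\<Sum>x2\<in>?B. \<Sum>y1\<in>?C. \<Sum>y2\<in>?D. b x2 * c y1 * d y2 * br x2 y1 y2 j)"
      using kd_collapse[OF fb order_refl, of j] kd_collapse[OF fa order_refl, of i]
      by (simp only: kd_collapse[OF fb order_refl] kd_collapse[OF fa order_refl])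
    also have "\<dots> = tri_ext br a c d i * b j + a i * tri_ext br b c d j"
      using tri_superset[OF fa order_refl fc order_refl fd order_refl, of br i]
        tri_superset[OF fb order_refl fc order_refl fd order_refl, of br j]
      by (simp add: sum_distrib_left sum_distrib_right) (simp add: mult_ac)
    also have "\<dots> = (em (tp (tri_ext br a c d) b) + em (tp a (tri_ext br b c d))) z"
      by (simp add: ij em_def tp_def)
    finally show ?thesis .
  qed
qed


lemma fs_tri:
  assumes "leibniz3 B br" "x \<in> fs_on B" "y \<in> fs_on B" "z \<in> fs_on B"
  shows "tri_ext br x y z \<in> fs_on B"
  unfolding tri_ext_lin
  using assms unfolding leibniz3_def
  by (intro fs_lin_ext[where S = B]) auto

lemma dl_ident_em:
  fixes a b c d e f :: "'b \<Rightarrow> 'k::field"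
  assumes L: "leibniz3 B br" and fs: "a \<in> fs_on B" "b \<in> fs_on B" "c \<in> fs_on B" "d \<in> fs_on B"
    "e \<in> fs_on B" "f \<in> fs_on B"
  shows "dl br (dl br (em (tp a b)) (em (tp c d))) (em (tp e f)) =
    dl br (dl br (em (tp a b)) (em (tp e f))) (em (tp c d)) + dl br (em (tp a b)) (dl br (em (tp c d)) (em (tp e f)))"
proof -
  have fin: "fin a" "fin b" "fin c" "fin d" "fin e" "fin f" using fs by (auto dest: fs_on_fin)
  have fint: "fin (tri_ext br x y z)" if "x \<in> {a,b,c,d,e,f}" "y \<in> {a,b,c,d,e,f}" "z \<in> {a,b,c,d,e,f}" for x y z
    using fs_tri[OF L, of x y z] that fs by (auto dest: fs_on_fin)
  have LI: "tri_ext br (tri_ext br x1 x2 x3) y1 y2 =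
          (\<lambda>d. tri_ext br (tri_ext br x1 y1 y2) x2 x3 d
              + tri_ext br x1 (tri_ext br x2 y1 y2) x3 d
              + tri_ext br x1 x2 (tri_ext br x3 y1 y2) d)"
    if "x1 \<in> fs_on B" "x2 \<in> fs_on B" "x3 \<in> fs_on B" "y1 \<in> fs_on B" "y2 \<in> fs_on B" for x1 x2 x3 y1 y2
    using L that unfolding leibniz3_def by blast
  note LA = LI[OF fs(1,3,4,5,6)] and LB = LI[OF fs(2,3,4,5,6)]
  let ?t = "tri_ext br"
  have f1: "fin (?t a c d)" "fin (?t b c d)" "fin (?t a e f)" "fin (?t b e f)" "fin (?t c e f)" "fin (?t d e f)"
    by (auto intro!: fint)
  have "dl br (dl br (em (tp a b)) (em (tp c d))) (em (tp e f)) =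
      dl br (em (tp (?t a c d) b)) (em (tp e f)) + dl br (em (tp a (?t b c d))) (em (tp e f))"
    by (simp add: G fin f1 fin_em dl_add1)
  also have "\<dots> = em (tp (?t (?t a c d) e f) b) + em (tp (?t a c d) (?t b e f))
     + (em (tp (?t a e f) (?t b c d)) + em (tp a (?t (?t b c d) e f)))"
    by (simp add: G fin f1)
  finally have LHS: "dl br (dl br (em (tp a b)) (em (tp c d))) (em (tp e f)) = \<dots>" .
  have "dl br (dl br (em (tp a b)) (em (tp e f))) (em (tp c d)) =
      dl br (em (tp (?t a e f) b)) (em (tp c d)) + dl br (em (tp a (?t b e f))) (em (tp c d))"
    by (simp add: G fin f1 fin_em dl_add1)
  also have "\<dots> = em (tp (?t (?t a e f) c d) b) + em (tp (?t a e f) (?t b c d))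
     + (em (tp (?t a c d) (?t b e f)) + em (tp a (?t (?t b e f) c d)))"
    by (simp add: G fin f1)
  finally have R1: "dl br (dl br (em (tp a b)) (em (tp e f))) (em (tp c d)) = \<dots>" .
  have "dl br (em (tp a b)) (dl br (em (tp c d)) (em (tp e f))) =
      dl br (em (tp a b)) (em (tp (?t c e f) d)) + dl br (em (tp a b)) (em (tp c (?t d e f)))"
    by (simp add: G fin f1 fin_em dl_add2)
  also have "\<dots> = em (tp (?t a (?t c e f) d) b) + em (tp a (?t b (?t c e f) d))
     + (em (tp (?t a c (?t d e f)) b) + em (tp a (?t b c (?t d e f))))"
    by (simp add: G fin f1)
  finally have R2: "dl br (em (tp a b)) (dl br (em (tp c d)) (em (tp e f))) = \<dots>" .
  show ?thesis
    unfolding LHS R1 R2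
  proof (rule ext)
    fix z
    show "(em (tp (?t (?t a c d) e f) b) + em (tp (?t a c d) (?t b e f))
     + (em (tp (?t a e f) (?t b c d)) + em (tp a (?t (?t b c d) e f)))) z =
     (em (tp (?t (?t a e f) c d) b) + em (tp (?t a e f) (?t b c d))
     + (em (tp (?t a c d) (?t b e f)) + em (tp a (?t (?t b e f) c d)))
     + (em (tp (?t a (?t c e f) d) b) + em (tp a (?t b (?t c e f) d))
     + (em (tp (?t a c (?t d e f)) b) + em (tp a (?t b c (?t d e f)))))) z"
    proof (cases z)
      case (Some ij)
      then obtain i j where z: "z = Some (i, j)" by (cases ij) auto
      show ?thesis unfolding z by (simp add: em_def tp_def LA LB algebra_simps)
    qed (simp add: em_def)
  qed
qed


lemma ev_Some: "ev (Some (x, y)) = em (tp (ev x) (ev y))"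
  by (auto simp: ev_def em_def tp_def fun_eq_iff split: option.split)

lemma fin_ev [simp]: "fin (ev i)"
  by (rule finite_subset[of _ "{i}"]) (auto simp: ev_def)

lemma fs_ev: "i \<in> S \<Longrightarrow> ev i \<in> fs_on S"
  by (auto simp: fs_on_def ev_def)

lemma fs_tp: "(u :: 'i \<Rightarrow> 'k::field) \<in> fs_on S \<Longrightarrow> v \<in> fs_on T \<Longrightarrow> tp u v \<in> fs_on (S \<times> T)"
  by (intro fs_onI finite_subset[OF _ finite_cartesian_product[of "{i. u i \<noteq> 0}" "{i. v i \<noteq> 0}"]])
     (auto simp: tp_def dest: fs_on_fin fs_on_supp)

lemma fs_Ncoef:
  assumes L: "leibniz3 B br" and a: "a \<in> Vbasis B" and b: "b \<in> Vbasis B"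
  shows "Ncoef br a b \<in> fs_on (Vbasis B)"
proof (cases "\<exists>x1 x2 y1 y2. a = Some (x1, x2) \<and> b = Some (y1, y2)")
  case True
  then obtain x1 x2 y1 y2 where ab: "a = Some (x1, x2)" "b = Some (y1, y2)" by blast
  have B: "x1 \<in> B" "x2 \<in> B" "y1 \<in> B" "y2 \<in> B" using a b ab by (auto simp: Vbasis_def)
  have f1: "br x1 y1 y2 \<in> fs_on B" "br x2 y1 y2 \<in> fs_on B" using L B by (auto simp: leibniz3_def)
  let ?X = "Some ` (({c. br x1 y1 y2 c \<noteq> 0} \<times> {x2}) \<union> ({x1} \<times> {d. br x2 y1 y2 d \<noteq> 0}))"
  have sub: "{q. Ncoef br a b q \<noteq> 0} \<subseteq> ?X"
  proof
    fix q assume q: "q \<in> {q. Ncoef br a b q \<noteq> 0}"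
    then obtain c d where qs: "q = Some (c, d)"
      by (cases q) (auto simp: ab Ncoef_def)
    have "br x1 y1 y2 c * kdelta d x2 + kdelta c x1 * br x2 y1 y2 d \<noteq> 0"
      using q by (simp add: ab qs Ncoef_def)
    then have "(br x1 y1 y2 c \<noteq> 0 \<and> d = x2) \<or> (c = x1 \<and> br x2 y1 y2 d \<noteq> 0)"
      by (cases "d = x2"; cases "c = x1") (auto simp: kdelta_def)
    then show "q \<in> ?X" by (auto simp: qs)
  qed
  show ?thesis
  proof (rule fs_onI)
    show "fin (Ncoef br a b)" using f1 by (intro finite_subset[OF sub]) (auto dest: fs_on_fin)
    show "{q. Ncoef br a b q \<noteq> 0} \<subseteq> Vbasis B"
      using sub f1 B by (auto simp: Vbasis_def dest: fs_on_supp)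
  qed
next
  case False
  then have "Ncoef br a b = (\<lambda>_. 0)"
    by (auto simp: Ncoef_def fun_eq_iff split: option.split)
  then show ?thesis by (simp add: fs_on_def)
qed

lemma fs_Phi:
  assumes L: "leibniz3 B br" and F: "F \<in> fs_on (Vbasis B \<times> Vbasis B)"
  shows "Phi br F \<in> fs_on (Vbasis B)"
  unfolding Phi_def using F by (rule fs_lin_ext) (auto intro: fs_Ncoef[OF L])

lemma fs_dl:
  assumes L: "leibniz3 B br" and "u \<in> fs_on (Vbasis B)" "v \<in> fs_on (Vbasis B)"
  shows "dl br u v \<in> fs_on (Vbasis B)"
  unfolding dl_def using assms by (intro fs_Phi fs_tp)

lemma dl_ident:
  assumes L: "leibniz3 B br" and pqr: "p \<in> Vbasis B" "q \<in> Vbasis B" "r \<in> Vbasis B"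
  shows "dl br (dl br (ev p) (ev q)) (ev r) = dl br (dl br (ev p) (ev r)) (ev q) + dl br (ev p) (dl br (ev q) (ev r))"
proof (cases "p = None \<or> q = None \<or> r = None")
  case True
  then show ?thesis by auto
next
  case False
  then obtain x1 x2 y1 y2 w1 w2 where s: "p = Some (x1, x2)" "q = Some (y1, y2)" "r = Some (w1, w2)"
    by auto
  have B: "x1 \<in> B" "x2 \<in> B" "y1 \<in> B" "y2 \<in> B" "w1 \<in> B" "w2 \<in> B" using pqr s by (auto simp: Vbasis_def)
  show ?thesis unfolding s ev_Some
    by (rule dl_ident_em[OF L]) (auto intro: fs_ev B)
qed


lemma fin_add': "fin (f::'i \<Rightarrow> 'k::field) \<Longrightarrow> fin g \<Longrightarrow> finite {i. f i + g i \<noteq> 0}"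
  using fin_add[of f g] by simp

lemma ybe_basis:
  assumes L: "leibniz3 B br" and pqr: "p \<in> Vbasis B" "q \<in> Vbasis B" "r \<in> Vbasis B"
  shows "lin_ext (tensor_id_right (Rbasis br)) (lin_ext (tensor_id_left (Rbasis br))
           (lin_ext (tensor_id_right (Rbasis br)) (T3 (ev p) (ev q) (ev r)))) =
         lin_ext (tensor_id_left (Rbasis br)) (lin_ext (tensor_id_right (Rbasis br))
           (lin_ext (tensor_id_left (Rbasis br)) (T3 (ev p) (ev q) (ev r))))"
proof -
  define I where "I = Vbasis B"
  have NI: "None \<in> I" by (simp add: I_def Vbasis_def)
  have fsI: "ev p \<in> fs_on I" "ev q \<in> fs_on I" "ev r \<in> fs_on I" "ev None \<in> fs_on I"
    using pqr NI by (auto simp: I_def intro: fs_ev)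
  have fsdl: "\<And>u v. u \<in> fs_on I \<Longrightarrow> v \<in> fs_on I \<Longrightarrow> dl br u v \<in> fs_on I"
    unfolding I_def by (rule fs_dl[OF L])
  have findl: "\<And>u v. u \<in> fs_on I \<Longrightarrow> v \<in> fs_on I \<Longrightarrow> fin (dl br u v)"
    using fsdl by (blast dest: fs_on_fin)
  have ident: "dl br (dl br (ev p) (ev q)) (ev r) = dl br (dl br (ev p) (ev r)) (ev q) + dl br (ev p) (dl br (ev q) (ev r))"
    by (rule dl_ident[OF L pqr])
  show ?thesis
    by (simp add: R12 R23 lin_ext_add fin_T3 fin_add' findl fsdl fsI ident T3_add3 add_ac)
qed


lemma ev_pair: "ev (p, q) = tp (ev p) (ev q)"
  by (auto simp: ev_def tp_def fun_eq_iff)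

lemma ev_triple: "ev (p, q, r) = T3 (ev p) (ev q) (ev r)"
  by (auto simp: ev_def T3_def fun_eq_iff)

lemma fs_add:
  assumes "(f::'i \<Rightarrow> 'k::field) \<in> fs_on S" "g \<in> fs_on S"
  shows "f + g \<in> fs_on S"
proof (rule fs_onI)
  show "fin (f + g)" using assms by (intro fin_add) (auto dest: fs_on_fin)
  show "{i. (f + g) i \<noteq> 0} \<subseteq> S"
  proof
    fix i assume "i \<in> {i. (f + g) i \<noteq> 0}"
    then have "f i \<noteq> 0 \<or> g i \<noteq> 0" by auto
    then show "i \<in> S" using assms by (auto dest: fs_on_supp)
  qed
qed

lemma fs_T3:
  assumes "(u::'i \<Rightarrow> 'k::field) \<in> fs_on S" "v \<in> fs_on S" "w \<in> fs_on S"
  shows "T3 u v w \<in> fs_on (S \<times> S \<times> S)"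
proof (rule fs_onI)
  show "fin (T3 u v w)" using assms by (intro fin_T3) (auto dest: fs_on_fin)
  show "{i. T3 u v w i \<noteq> 0} \<subseteq> S \<times> S \<times> S"
  proof
    fix i assume i: "i \<in> {i. T3 u v w i \<noteq> 0}"
    obtain p q r where ii: "i = (p, q, r)" by (cases i) auto
    have "u p \<noteq> 0" "v q \<noteq> 0" "w r \<noteq> 0" using i by (auto simp: ii T3_def)
    then show "i \<in> S \<times> S \<times> S" using assms by (auto simp: ii dest: fs_on_supp)
  qed
qed

lemma Rbasis_fs:
  assumes L: "leibniz3 B br" and "p \<in> Vbasis B" "q \<in> Vbasis B"
  shows "Rbasis br (p, q) \<in> fs_on (Vbasis B \<times> Vbasis B)"
proof -
  have NI: "None \<in> Vbasis B" by (simp add: Vbasis_def)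
  have "Rbasis br (p, q) = tp (ev q) (ev p) + tp (ev None) (dl br (ev p) (ev q))"
    using lin_ext_ev[of "Rbasis br" "(p, q)"] by (simp add: ev_pair R_tp)
  also have "\<dots> \<in> fs_on (Vbasis B \<times> Vbasis B)"
    using assms NI by (intro fs_add fs_tp fs_ev fs_dl[OF L]) auto
  finally show ?thesis .
qed

lemma fsM1:
  assumes L: "leibniz3 B br" and "i \<in> Vbasis B \<times> Vbasis B \<times> Vbasis B"
  shows "tensor_id_right (Rbasis br) i \<in> fs_on (Vbasis B \<times> Vbasis B \<times> Vbasis B)"
proof -
  obtain p q r where i: "i = (p, q, r)" by (cases i) auto
  have NI: "None \<in> Vbasis B" by (simp add: Vbasis_def)
  have "tensor_id_right (Rbasis br) i = T3 (ev q) (ev p) (ev r) + T3 (ev None) (dl br (ev p) (ev q)) (ev r)"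
    using lin_ext_ev[of "tensor_id_right (Rbasis br)" i] by (simp add: i ev_triple R12)
  also have "\<dots> \<in> fs_on (Vbasis B \<times> Vbasis B \<times> Vbasis B)"
    using assms NI by (intro fs_add fs_T3 fs_ev fs_dl[OF L]) (auto simp: i)
  finally show ?thesis .
qed

lemma fsM2:
  assumes L: "leibniz3 B br" and "i \<in> Vbasis B \<times> Vbasis B \<times> Vbasis B"
  shows "tensor_id_left (Rbasis br) i \<in> fs_on (Vbasis B \<times> Vbasis B \<times> Vbasis B)"
proof -
  obtain p q r where i: "i = (p, q, r)" by (cases i) auto
  have NI: "None \<in> Vbasis B" by (simp add: Vbasis_def)
  have "tensor_id_left (Rbasis br) i = T3 (ev p) (ev r) (ev q) + T3 (ev p) (ev None) (dl br (ev q) (ev r))"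
    using lin_ext_ev[of "tensor_id_left (Rbasis br)" i] by (simp add: i ev_triple R23)
  also have "\<dots> \<in> fs_on (Vbasis B \<times> Vbasis B \<times> Vbasis B)"
    using assms NI by (intro fs_add fs_T3 fs_ev fs_dl[OF L]) (auto simp: i)
  finally show ?thesis .
qed

lemma Phi_cong:
  fixes F G :: "('b \<times> 'b) option \<times> ('b \<times> 'b) option \<Rightarrow> 'k::field"
  assumes "fin F" "fin G" "\<And>x y. x \<noteq> None \<Longrightarrow> y \<noteq> None \<Longrightarrow> F (x, y) = G (x, y)"
  shows "Phi br F = Phi br G"
proof
  fix q
  let ?S = "{i. F i \<noteq> 0} \<union> {i. G i \<noteq> 0}"
  have fS: "finite ?S" using assms by auto
  have "Phi br F q = (\<Sum>i\<in>?S. F i * (case i of (a, b) \<Rightarrow> Ncoef br a b) q)"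
    unfolding Phi_def by (rule lin_ext_superset[OF fS]) auto
  also have "\<dots> = (\<Sum>i\<in>?S. G i * (case i of (a, b) \<Rightarrow> Ncoef br a b) q)"
  proof (rule sum.cong[OF refl])
    fix i :: "('b \<times> 'b) option \<times> ('b \<times> 'b) option"
    obtain x y where i: "i = (x, y)" by (cases i)
    show "F i * (case i of (a, b) \<Rightarrow> Ncoef br a b) q = G i * (case i of (a, b) \<Rightarrow> Ncoef br a b) q"
    proof (cases "x = None \<or> y = None")
      case True
      then show ?thesis by (auto simp: i Ncoef_def split: option.split)
    qed (simp add: i assms(3))
  qed
  also have "\<dots> = Phi br G q"
    unfolding Phi_def by (rule lin_ext_superset[OF fS, symmetric]) auto
  finally show "Phi br F q = Phi br G q" .
qed


lemma R_bij:
  assumes L: "leibniz3 B br"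
  shows "bij_betw (lin_ext (Rbasis br)) (fs_on (Vbasis B \<times> Vbasis B)) (fs_on (Vbasis B \<times> Vbasis B))"
proof -
  define I where "I = Vbasis B"
  have NI: "None \<in> I" by (simp add: I_def Vbasis_def)
  have into: "lin_ext (Rbasis br) F \<in> fs_on (I \<times> I)" if "F \<in> fs_on (I \<times> I)" for F
    using that by (rule fs_lin_ext) (auto simp: I_def intro: Rbasis_fs[OF L])
  have inj: "inj_on (lin_ext (Rbasis br)) (fs_on (I \<times> I))"
  proof (rule inj_onI)
    fix F G assume F: "F \<in> fs_on (I \<times> I)" and G: "G \<in> fs_on (I \<times> I)"
      and eq: "lin_ext (Rbasis br) F = lin_ext (Rbasis br) G"
    have fF: "fin F" and fG: "fin G" using F G by (auto dest: fs_on_fin)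
    have pt: "F (x, y) + ev None y * Phi br F x = G (x, y) + ev None y * Phi br G x" for x y
      using fun_cong[OF eq, of "(y, x)"] unfolding R_formula[OF fF] R_formula[OF fG] by simp
    have ss: "F (x, y) = G (x, y)" if "y \<noteq> None" for x y
      using pt[of x y] that by (simp add: ev_def)
    have "Phi br F = Phi br G"
      using fF fG by (rule Phi_cong) (rule ss)
    then show "F = G" using pt by (auto simp: fun_eq_iff)
  qed
  have surj: "H \<in> lin_ext (Rbasis br) ` fs_on (I \<times> I)" if H: "H \<in> fs_on (I \<times> I)" for H
  proof -
    define tH where "tH = (\<lambda>(p, q). H (q, p))"
    have ftH: "tH \<in> fs_on (I \<times> I)"
    proof (rule fs_onI)
      have "{i. tH i \<noteq> 0} = prod.swap ` {i. H i \<noteq> 0}"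
        by (auto simp: tH_def image_iff)
      then show "fin tH" using H by (auto dest: fs_on_fin)
      show "{i. tH i \<noteq> 0} \<subseteq> I \<times> I"
        using H by (auto simp: tH_def dest: fs_on_supp)
    qed
    define P where "P = Phi br tH"
    have fP: "P \<in> fs_on I" unfolding P_def I_def using L ftH[unfolded I_def] by (rule fs_Phi)
    have fnP: "(\<lambda>p. - P p) \<in> fs_on I" using fP by (simp add: fs_on_def)
    define F where "F = tH + tp (\<lambda>p. - P p) (ev None)"
    have fF: "F \<in> fs_on (I \<times> I)" unfolding F_def
      using ftH fnP NI by (intro fs_add fs_tp fs_ev)
    have "Phi br F = Phi br tH"
      using fF ftH by (intro Phi_cong) (auto simp: F_def tp_def ev_def dest: fs_on_fin)
    moreover have "fin F" using fF by (rule fs_on_fin)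
    ultimately have "lin_ext (Rbasis br) F = H"
      unfolding R_formula[OF \<open>fin F\<close>]
      by (auto simp: fun_eq_iff F_def tp_def tH_def P_def ev_def)
    then show ?thesis using fF by blast
  qed
  show ?thesis unfolding I_def[symmetric] bij_betw_def
    using inj into surj by blast
qed


theorem corollary5p7:
  fixes B :: "'b set" and br :: "'b \<Rightarrow> 'b \<Rightarrow> 'b \<Rightarrow> 'b \<Rightarrow> 'k::field"
  assumes "leibniz3 B br"
  shows "YBE_solution (Vbasis B) (Rbasis br)"
proof -
  note L = assms
  define I where "I = Vbasis B"
  let ?M1 = "tensor_id_right (Rbasis br)" and ?M2 = "tensor_id_left (Rbasis br)"
  have p1: "\<forall>ij\<in>I \<times> I. Rbasis br ij \<in> fs_on (I \<times> I)"
    unfolding I_def using Rbasis_fs[OF L] by auto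
  have p2: "bij_betw (lin_ext (Rbasis br)) (fs_on (I \<times> I)) (fs_on (I \<times> I))"
    unfolding I_def by (rule R_bij[OF L])
  have fs1: "?M1 i \<in> fs_on (I \<times> I \<times> I)" if "i \<in> I \<times> I \<times> I" for i
    using fsM1[OF L] that unfolding I_def by blast
  have fs2: "?M2 i \<in> fs_on (I \<times> I \<times> I)" if "i \<in> I \<times> I \<times> I" for i
    using fsM2[OF L] that unfolding I_def by blast
  have p3: "lin_ext ?M1 (lin_ext ?M2 (lin_ext ?M1 w)) = lin_ext ?M2 (lin_ext ?M1 (lin_ext ?M2 w))"
    if w: "w \<in> fs_on (I \<times> I \<times> I)" for w
  proof -
    have fw: "fin w" using w by (rule fs_on_fin)
    have sw: "i \<in> I \<times> I \<times> I" if "w i \<noteq> 0" for i using fs_on_supp[OF w that] .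
    have "lin_ext ?M1 (lin_ext ?M2 (lin_ext ?M1 w)) = lin_ext ?M1 (lin_ext (\<lambda>i. lin_ext ?M2 (?M1 i)) w)"
      using fw by (subst lin_ext_comp) (auto dest!: sw fs1 intro: fs_on_fin)
    also have "\<dots> = lin_ext (\<lambda>i. lin_ext ?M1 (lin_ext ?M2 (?M1 i))) w"
      using fw by (subst lin_ext_comp)
        (auto dest!: sw intro!: fs_on_fin[OF fs_lin_ext[OF fs1 fs2]])
    also have "\<dots> = lin_ext (\<lambda>i. lin_ext ?M2 (lin_ext ?M1 (?M2 i))) w"
    proof (rule lin_ext_cong)
      fix i assume "w i \<noteq> 0"
      then have i: "i \<in> I \<times> I \<times> I" by (rule sw)
      obtain p q r where pqr: "i = (p, q, r)" by (cases i) auto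
      have "p \<in> Vbasis B" "q \<in> Vbasis B" "r \<in> Vbasis B" using i by (auto simp: pqr I_def)
      note yb = ybe_basis[OF L this]
      show "lin_ext ?M1 (lin_ext ?M2 (?M1 i)) = lin_ext ?M2 (lin_ext ?M1 (?M2 i))"
        using yb unfolding lin_ext_ev[of ?M1 i, symmetric] lin_ext_ev[of ?M2 i, symmetric]
        by (simp add: pqr ev_triple)
    qed
    also have "\<dots> = lin_ext ?M2 (lin_ext (\<lambda>i. lin_ext ?M1 (?M2 i)) w)"
      using fw by (subst lin_ext_comp)
        (auto dest!: sw intro!: fs_on_fin[OF fs_lin_ext[OF fs2 fs1]])
    also have "\<dots> = lin_ext ?M2 (lin_ext ?M1 (lin_ext ?M2 w))"
      using fw by (subst lin_ext_comp) (auto dest!: sw fs2 intro: fs_on_fin)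
    finally show ?thesis .
  qed
  show ?thesis
    unfolding YBE_solution_def I_def[symmetric] using p1 p2 p3 by blast
qed

end
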